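(* Let $\mathcal A$ be a unital $C^*$-algebra, let $p,q\in\mathcal A$ be projections and let $a\in\mathcal A$ be invertible up to $(p,q)$. (a) There is a projection $q'\in\mathcal A$ with $q'\sim q$ such that $a$ is invertible up to $(p,q')$ and $q'a(1-p)=0$. (b) There is a projection $p'\in\mathcal A$ with $p'\sim p$ such that $a$ is invertible up to $(p',q)$ and $(1-q)ap'=0$.
   Context: For projections $p,q$ in a unital $C^*$-algebra $\mathcal A$, $p\sim q$ (Murray–von Neumann equivalence) means there is $v\in\mathcal A$ with $vv^*=p$, $v^*v=q$. For $a\in\mathcal A$ and projections $p,q\in\mathcal A$, $a$ is invertible up to $(p,q)$ if there is $b\in\mathcal A$ with $b=(1-p)b(1-q)$, $(1-q)a(1-p)b=1-q$ and $b(1-q)a(1-p)=1-p$. *)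

theory Defs
  imports "HOL-Analysis.Analysis"
begin

class cstar_algebra = banach + real_normed_algebra_1 +
  fixes scaleC :: "complex \<Rightarrow> 'a \<Rightarrow> 'a"
    and adj :: "'a \<Rightarrow> 'a"
  assumes scaleR_scaleC: "scaleR r x = scaleC (complex_of_real r) x"
    and scaleC_add_left: "scaleC (c + d) x = scaleC c x + scaleC d x"
    and scaleC_add_right: "scaleC c (x + y) = scaleC c x + scaleC c y"
    and scaleC_scaleC: "scaleC c (scaleC d x) = scaleC (c * d) x"
    and scaleC_one: "scaleC 1 x = x"
    and scaleC_mult_left: "scaleC c (x * y) = scaleC c x * y"
    and scaleC_mult_right: "scaleC c (x * y) = x * scaleC c y"
    and norm_scaleC: "norm (scaleC c x) = cmod c * norm x"
    and adj_adj: "adj (adj x) = x"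
    and adj_add: "adj (x + y) = adj x + adj y"
    and adj_mult: "adj (x * y) = adj y * adj x"
    and adj_scaleC: "adj (scaleC c x) = scaleC (cnj c) (adj x)"
    and cstar_identity: "norm (adj x * x) = (norm x)\<^sup>2"

definition is_projection :: "'a::cstar_algebra \<Rightarrow> bool" where
  "is_projection p \<longleftrightarrow> adj p = p \<and> p * p = p"

definition mvn_equiv :: "'a::cstar_algebra \<Rightarrow> 'a \<Rightarrow> bool" where
  "mvn_equiv p q \<longleftrightarrow> (\<exists>v. v * adj v = p \<and> adj v * v = q)"

definition invertible_upto :: "'a::cstar_algebra \<Rightarrow> 'a \<Rightarrow> 'a \<Rightarrow> bool" where
  "invertible_upto a p q \<longleftrightarrow>
     (\<exists>b. b = (1 - p) * b * (1 - q) \<and>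
          (1 - q) * a * (1 - p) * b = 1 - q \<and>
          b * (1 - q) * a * (1 - p) = 1 - p)"

end

theory Submission imports Defs "HOL-Computational_Algebra.Formal_Power_Series"
begin

definition cs :: "complex \<Rightarrow> 'a::cstar_algebra" where "cs c = scaleC c 1"

lemma scaleC_cs: "scaleC c (x::'a::cstar_algebra) = cs c * x"
  unfolding cs_def by (metis scaleC_mult_left mult_1_left)
lemma cs_comm: "cs c * (x::'a::cstar_algebra) = x * cs c"
  unfolding cs_def by (metis scaleC_mult_left scaleC_mult_right mult_1_left mult_1_right)
lemma cs_mult: "cs c * cs d = (cs (c * d)::'a::cstar_algebra)"
  by (metis cs_def scaleC_cs scaleC_scaleC)
lemma cs_add: "cs c + cs d = (cs (c + d)::'a::cstar_algebra)"
  by (simp add: cs_def scaleC_add_left)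
lemma cs_one: "cs 1 = (1::'a::cstar_algebra)" by (simp add: cs_def scaleC_one)
lemma cs_of_real: "cs (complex_of_real r) = (of_real r::'a::cstar_algebra)"
  by (metis cs_def scaleR_scaleC scaleR_conv_of_real mult_1_right)
lemma cs_zero: "cs 0 = (0::'a::cstar_algebra)" using cs_of_real[of 0] by simp
lemma cs_minus1: "cs (-1) = (-1::'a::cstar_algebra)" using cs_of_real[of "-1"] by simp
lemma cs_minus: "cs (- c) = - (cs c::'a::cstar_algebra)"
  by (metis cs_minus1 cs_mult mult_minus1 mult_minus_left mult_1_left)
lemma norm_cs: "norm (cs c::'a::cstar_algebra) = cmod c"
  by (simp add: cs_def norm_scaleC)

lemma adj_one: "adj 1 = (1::'a::cstar_algebra)"
  by (metis adj_adj adj_mult mult_1_left mult_1_right)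
lemma adj_zero: "adj 0 = (0::'a::cstar_algebra)"
  by (metis adj_add add_cancel_right_right add_0)
lemma adj_cs: "adj (cs c) = (cs (cnj c)::'a::cstar_algebra)"
  by (simp add: cs_def adj_scaleC adj_one)
lemma adj_minus: "adj (- x) = - adj (x::'a::cstar_algebra)"
  by (metis adj_add adj_zero add.right_inverse add_eq_0_iff)
lemma adj_diff: "adj (x - y) = adj x - adj (y::'a::cstar_algebra)"
  by (metis adj_add adj_minus diff_conv_add_uminus)
lemma adj_scaleR: "adj (scaleR r x) = scaleR r (adj (x::'a::cstar_algebra))"
  by (simp add: scaleR_scaleC adj_scaleC)

lemma norm_le_adj: "norm x \<le> norm (adj (x::'a::cstar_algebra))"
proof (cases "x = 0")
  case True then show ?thesis by simp
next
  case False
  have "(norm x)^2 \<le> norm (adj x) * norm x"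
    by (metis cstar_identity norm_mult_ineq)
  then show ?thesis using False by (simp add: power2_eq_square)
qed
lemma norm_adj: "norm (adj x) = norm (x::'a::cstar_algebra)"
  by (metis antisym norm_le_adj adj_adj)

lemma bounded_linear_adj: "bounded_linear (adj::'a::cstar_algebra \<Rightarrow> 'a)"
  apply (rule bounded_linear_intro[where K=1])
  by (simp_all add: adj_add adj_scaleR norm_adj)

lemma adj_suminf: "summable f \<Longrightarrow> adj (suminf f) = (\<Sum>n. adj (f n::'a::cstar_algebra))"
  using bounded_linear.suminf[OF bounded_linear_adj] by metis

lemma neumann:
  fixes z :: "'a::cstar_algebra"
  assumes "norm z < 1"
  shows "\<exists>y. (1 - z) * y = 1 \<and> y * (1 - z) = 1"
proof -
  have sm: "summable (\<lambda>n. z ^ n)"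
    by (rule summable_comparison_test[where g="\<lambda>n. norm z ^ n"])
       (auto intro: norm_power_ineq simp: summable_geometric assms)
  define y where "y = suminf (\<lambda>n. z ^ n)"
  have sh: "y = 1 + (\<Sum>n. z ^ Suc n)"
    using suminf_split_head[OF sm] by (simp add: y_def)
  have a: "(\<Sum>n. z ^ Suc n) = z * y"
    unfolding y_def using suminf_mult[OF sm, of z] by simp
  have b: "(\<Sum>n. z ^ Suc n) = y * z"
    using suminf_mult2[OF sm, of z] by (simp only: y_def power_Suc2)
  have "(1 - z) * y = y - z * y" by (simp add: algebra_simps)
  also have "\<dots> = 1" using sh a by simp
  finally have 1: "(1 - z) * y = 1" .
  have "y * (1 - z) = y - y * z" by (simp add: algebra_simps)
  also have "\<dots> = 1" using sh b by simp
  finally have 2: "y * (1 - z) = 1" .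
  show ?thesis using 1 2 by blast
qed

lemma inv_shift:
  fixes k :: "'a::cstar_algebra"
  assumes "norm k < cmod \<mu>"
  shows "\<exists>y. (k + cs \<mu>) * y = 1 \<and> y * (k + cs \<mu>) = 1"
proof -
  have mu: "\<mu> \<noteq> 0" using assms by auto
  define z where "z = - (cs (1/\<mu>) * k)"
  have "norm z \<le> cmod (1/\<mu>) * norm k"
    unfolding z_def norm_minus_cancel using norm_mult_ineq[of "cs (1/\<mu>)" k] by (simp add: norm_cs)
  also have "\<dots> < 1" using assms mu by (simp add: norm_divide field_simps)
  finally obtain y0 where y0: "(1 - z) * y0 = 1" "y0 * (1 - z) = 1" using neumann by blast
  have e: "k + cs \<mu> = cs \<mu> * (1 - z)"
    using mu by (simp add: z_def algebra_simps cs_mult cs_one flip: mult.assoc)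
  have i1: "cs \<mu> * cs (1/\<mu>) = (1::'a)" "cs (1/\<mu>) * cs \<mu> = (1::'a)"
    using mu by (simp_all add: cs_mult cs_one)
  show ?thesis
  proof (rule exI[of _ "y0 * cs (1/\<mu>)"], rule conjI)
    have "(k + cs \<mu>) * (y0 * cs (1/\<mu>)) = cs \<mu> * ((1 - z) * y0) * cs (1/\<mu>)"
      by (simp add: e mult.assoc)
    also have "\<dots> = 1" using y0 i1 by simp
    finally show "(k + cs \<mu>) * (y0 * cs (1/\<mu>)) = 1" .
    have "(y0 * cs (1/\<mu>)) * (k + cs \<mu>) = y0 * (cs (1/\<mu>) * cs \<mu>) * (1 - z)"
      by (simp add: e mult.assoc)
    also have "\<dots> = 1" using y0 i1 by simp
    finally show "(y0 * cs (1/\<mu>)) * (k + cs \<mu>) = 1" .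
  qed
qed

lemma selfadj_inv:
  fixes h :: "'a::cstar_algebra"
  assumes h: "adj h = h" and c: "c^2 = (1::real)"
  shows "\<exists>y. (h + cs (\<i> * complex_of_real c)) * y = 1 \<and> y * (h + cs (\<i> * complex_of_real c)) = 1"
proof -
  define H where "H = (norm h)^2"
  define t where "t = c * H"
  define k where "k = h - cs (\<i> * complex_of_real t)"
  define \<mu> where "\<mu> = \<i> * complex_of_real (c + t)"
  have eq: "h + cs (\<i> * complex_of_real c) = k + cs \<mu>"
    unfolding k_def \<mu>_def by (simp add: algebra_simps cs_add[symmetric])
  have ak: "adj k = h + cs (\<i> * complex_of_real t)"
    unfolding k_def by (simp add: adj_diff h adj_cs cs_minus)
  have ss: "cs (\<i> * complex_of_real t) * cs (\<i> * complex_of_real t) = (of_real (- (t^2)) :: 'a)"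
    by (simp add: cs_mult power2_eq_square algebra_simps flip: cs_of_real)
  have kk: "adj k * k = h * h + of_real (t^2)"
  proof -
    have "adj k * k = h * h - cs (\<i> * complex_of_real t) * cs (\<i> * complex_of_real t)"
      unfolding ak unfolding k_def by (simp add: algebra_simps cs_comm[of _ h])
    thus ?thesis by (simp add: ss)
  qed
  have "(norm k)^2 \<le> H + t^2"
  proof -
    have "(norm k)^2 = norm (h * h + of_real (t^2))" by (metis kk cstar_identity)
    also have "\<dots> \<le> norm (h*h) + norm (of_real (t^2) :: 'a)" by (rule norm_triangle_ineq)
    also have "\<dots> \<le> H + t^2"
    proof -
      have "norm (of_real (t^2) :: 'a) = t^2" by (simp only: norm_of_real) simp
      thus ?thesis using norm_mult_ineq[of h h] by (simp add: H_def power2_eq_square)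
    qed
    finally show ?thesis .
  qed
  moreover have t2: "t^2 = H^2" using c by (simp add: t_def power_mult_distrib)
  moreover have H0: "H \<ge> 0" by (simp add: H_def)
  ultimately have "(norm k)^2 < (1 + H)^2" by (simp add: power2_eq_square algebra_simps)
  hence "norm k < 1 + H" using H0 by (smt (verit) power_mono norm_ge_zero)
  moreover have "cmod \<mu> = 1 + H"
  proof -
    have "\<bar>c\<bar> = 1" using c by (metis abs_of_nonneg abs_power2 abs_square_eq_1 power2_abs zero_le_one)
    hence "\<bar>c + t\<bar> = 1 + H" unfolding t_def using H0
      by (cases "c \<ge> 0") (auto simp: abs_if algebra_simps)
    thus ?thesis unfolding \<mu>_def norm_mult by (simp only: norm_of_real) simp
  qed
  ultimately show ?thesis using inv_shift[of k \<mu>] eq by simp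
qed


lemma norm_two_mult: "norm ((2::'a::real_normed_algebra_1) * x) = 2 * norm x"
proof -
  have "(2::'a) * x = scaleR 2 x" by (simp add: scaleR_conv_of_real)
  thus ?thesis by simp
qed

lemma lift: "(x::'a::semigroup_mult) * y = z \<Longrightarrow> x * (y * w) = z * w"
  by (metis mult.assoc)

lemma inv_comm:
  fixes x y t :: "'a::ring_1"
  assumes "x*y = 1" "y*x = 1" "t*x = x*t"
  shows "t*y = y*t"
proof -
  have "t*y = y*x*t*y" using assms by simp
  also have "\<dots> = y*t*x*y" using assms(3) by (simp add: mult.assoc)
  also have "\<dots> = y*t" using assms(1) by (simp add: mult.assoc)
  finally show ?thesis .
qed

lemma inv_unique:
  fixes x y y' :: "'a::ring_1"
  assumes "y*x = 1" "x*y' = 1"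
  shows "y = y'"
  by (metis assms mult.assoc mult_1_left mult_1_right)

lemma D_exists:
  fixes h :: "'a::cstar_algebra"
  assumes h: "adj h = h"
  shows "\<exists>D. (1 + h*h)*D = 1 \<and> D*(1+h*h) = 1 \<and> adj D = D \<and> norm (1 - 2*D) \<le> 1"
proof -
  define j :: 'a where "j = cs \<i>"
  have jj: "j * j = -1" unfolding j_def by (simp add: cs_mult cs_minus1)
  have jc: "\<And>x. j * x = x * j" unfolding j_def by (rule cs_comm)
  have jjx: "\<And>x. j * (j * x) = - x" using jj by (simp flip: mult.assoc)
  have aj: "adj j = - j" unfolding j_def by (simp add: adj_cs cs_minus)
  define A where "A = h + j"
  define B where "B = h - j"
  have c1: "(1::real)^2 = 1" and c2: "(-1::real)^2 = 1" by simp_all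
  have e1: "h + cs (\<i> * complex_of_real 1) = A" unfolding A_def j_def by simp
  have e2: "h + cs (\<i> * complex_of_real (-1)) = B" unfolding B_def j_def
    by (simp only: of_real_minus of_real_1 mult_minus_right mult_1_right cs_minus diff_conv_add_uminus)
  obtain Ai where Ai: "A * Ai = 1" "Ai * A = 1"
    using selfadj_inv[OF h c1] unfolding e1 by blast
  obtain Bi where Bi: "B * Bi = 1" "Bi * B = 1"
    using selfadj_inv[OF h c2] unfolding e2 by blast
  define C where "C = 1 + h*h"
  have jh: "j * h = h * j" by (rule jc)
  have AB: "A * B = C" unfolding A_def B_def C_def
    by (simp add: algebra_simps jh jj)
  have BA: "B * A = C" unfolding A_def B_def C_def
    by (simp add: algebra_simps jh jj)
  define D where "D = Bi * Ai"
  have CD: "C * D = 1" unfolding D_def AB[symmetric]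
    by (metis Ai(1) Bi(1) mult.assoc mult_1_left)
  have DC: "D * C = 1" unfolding D_def AB[symmetric]
    by (metis Ai(2) Bi(2) mult.assoc mult_1_left)
  have aA: "adj A = B" unfolding A_def B_def by (simp add: adj_add h aj)
  have aB: "adj B = A" unfolding A_def B_def by (simp add: adj_diff h aj)
  have aAi: "adj Ai = Bi"
    by (rule inv_unique[of _ B]) (metis Ai(1) aA adj_mult adj_one, rule Bi(1))
  have aBi: "adj Bi = Ai"
    by (rule inv_unique[of _ A]) (metis Bi(1) aB adj_mult adj_one, rule Ai(1))
  have aD: "adj D = D" unfolding D_def by (simp add: adj_mult aAi aBi)
  have hC: "h * C = C * h" unfolding C_def by (simp add: algebra_simps)
  have hD: "h * D = D * h" by (rule inv_comm[OF CD DC hC])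
  have jD: "j * D = D * j" by (rule jc)
  have AD: "A * D = D * A" unfolding A_def by (simp add: algebra_simps hD jD)
  have BD: "B * D = D * B" unfolding B_def by (simp add: algebra_simps hD jD)
  define u where "u = B * Ai"
  have au: "adj u = Bi * A" unfolding u_def by (simp add: adj_mult aAi aB)
  have uu: "adj u * u = 1"
  proof -
    have "adj u * u = Bi * A * u" by (simp only: au)
    also have "\<dots> = Bi * (A * B) * Ai" by (simp add: u_def mult.assoc)
    also have "\<dots> = (Bi * B) * (A * Ai)" unfolding AB BA[symmetric] by (simp add: mult.assoc)
    finally show ?thesis using Ai(1) Bi(2) by simp
  qed
  have nu: "norm u = 1"
  proof -
    have "(norm u)^2 = norm (adj u * u)" by (rule cstar_identity[symmetric])
    hence "(norm u)^2 = 1" by (simp add: uu)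
    thus ?thesis using norm_ge_zero[of u] by (auto simp: power2_eq_1_iff)
  qed
  have nau: "norm (adj u) = 1" using nu by (simp add: norm_adj)
  have u1: "u = B * B * D" by (simp add: u_def D_def mult.assoc lift[OF Bi(1)])
  have DA: "D * A = Bi" by (simp add: D_def mult.assoc Ai(2))
  have "adj u = D * A * A" by (simp add: au DA)
  also have "\<dots> = A * A * D" by (simp add: mult.assoc AD lift[OF AD])
  finally have u2: "adj u = A * A * D" .
  have "u + adj u = (B*B + A*A) * D" by (subst u2, subst u1, simp add: algebra_simps)
  also have "B*B + A*A = 2 * C - 4" unfolding A_def B_def C_def
    by (simp add: algebra_simps jh jj mult_2)
  also have "(2 * C - 4) * D = 2 * (C * D) - 4 * D" by (simp add: algebra_simps)
  also have "\<dots> = 2 * (1 - 2 * D)" by (simp add: CD algebra_simps)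
  finally have e: "2 * (1 - 2 * D) = u + adj u" by simp
  have "2 * norm (1 - 2 * D) = norm (u + adj u)" unfolding e[symmetric] by (rule norm_two_mult[symmetric])
  also have "\<dots> \<le> 2" using norm_triangle_ineq[of u "adj u"] nu nau by simp
  finally have "2 * norm (1 - 2 * D) \<le> 2" .
  hence "norm (1 - 2 * D) \<le> 1" by simp
  thus ?thesis using CD DC aD unfolding C_def by blast
qed

definition bc :: "nat \<Rightarrow> real" where "bc k = ((1/2::real) gchoose k)"

lemma bc_rec: "of_nat (Suc k) * bc (Suc k) = (1/2 - of_nat k) * bc k"
  using gbinomial_mult_1[of "1/2::real" k] unfolding bc_def by (simp add: algebra_simps)

lemma bc_abs_rec: "k \<ge> 1 \<Longrightarrow> of_nat (Suc k) * \<bar>bc (Suc k)\<bar> = (of_nat k - 1/2) * \<bar>bc k\<bar>"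
proof -
  assume k: "k \<ge> 1"
  have "\<bar>of_nat (Suc k) * bc (Suc k)\<bar> = \<bar>(1/2 - of_nat k) * bc k\<bar>" by (simp only: bc_rec)
  moreover have "\<bar>1/2 - (of_nat k::real)\<bar> = of_nat k - 1/2" using k by simp
  ultimately show ?thesis by (simp add: abs_mult)
qed

lemma bc_partial: "(\<Sum>i<Suc N. \<bar>bc i\<bar>) = 2 - 2 * of_nat (Suc N) * \<bar>bc (Suc N)\<bar>"
proof (induction N)
  case 0
  then show ?case by (simp add: bc_def)
next
  case (Suc N)
  have r: "of_nat (Suc (Suc N)) * \<bar>bc (Suc (Suc N))\<bar> = (of_nat (Suc N) - 1/2) * \<bar>bc (Suc N)\<bar>"
    by (rule bc_abs_rec) simp
  have "(\<Sum>i<Suc (Suc N). \<bar>bc i\<bar>) = 2 - 2 * of_nat (Suc N) * \<bar>bc (Suc N)\<bar> + \<bar>bc (Suc N)\<bar>"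
    using Suc by simp
  also have "\<dots> = 2 - 2 * (of_nat (Suc (Suc N)) * \<bar>bc (Suc (Suc N))\<bar>)"
    unfolding r by (simp add: algebra_simps)
  finally show ?case by simp
qed

lemma bc_summable: "summable (\<lambda>k. \<bar>bc k\<bar>)"
proof (rule bounded_imp_summable[where B=2])
  fix n
  have "(\<Sum>k\<le>n. \<bar>bc k\<bar>) = (\<Sum>k<Suc n. \<bar>bc k\<bar>)" by (simp add: lessThan_Suc_atMost)
  also have "\<dots> \<le> 2" unfolding bc_partial by simp
  finally show "(\<Sum>k\<le>n. \<bar>bc k\<bar>) \<le> 2" .
qed simp

lemma bc_conv: "(\<Sum>i\<le>k. bc i * bc (k - i)) = (if k \<le> 1 then 1 else 0)"
proof -
  have "(\<Sum>i\<le>k. bc i * bc (k - i)) = ((1/2 + 1/2::real) gchoose k)"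
    unfolding bc_def using gbinomial_Vandermonde[of "1/2::real" "1/2" k] by (simp add: atLeast0AtMost)
  also have "\<dots> = of_nat (1 choose k)" by (subst binomial_gbinomial) simp
  also have "\<dots> = (if k \<le> 1 then 1 else 0)"
    by (cases k) (auto simp: binomial_eq_0)
  finally show ?thesis .
qed

lemma sqrt_exists:
  fixes w :: "'a::cstar_algebra"
  assumes aw: "adj w = w" and nw: "norm w \<le> 1"
  shows "\<exists>s. adj s = s \<and> s * s = 1 - w \<and> (\<forall>t. t * w = w * t \<longrightarrow> t * s = s * t)"
proof -
  define f where "f k = scaleR (bc k) ((-w)^k)" for k
  have nf: "norm (f k) \<le> \<bar>bc k\<bar>" for k
  proof -
    have "norm ((-w)^k) \<le> 1"
      using norm_power_ineq[of "-w" k] power_le_one[of "norm w" k] nw by simp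
    thus ?thesis unfolding f_def by (simp add: mult_left_le)
  qed
  have snf: "summable (\<lambda>k. norm (f k))"
    by (rule summable_comparison_test[OF _ bc_summable]) (use nf in auto)
  have sf: "summable f" using snf by (rule summable_norm_cancel)
  define s where "s = suminf f"
  have "s * s = (\<Sum>k. \<Sum>i\<le>k. f i * f (k - i))"
    unfolding s_def by (rule Cauchy_product[OF snf snf])
  also have "\<dots> = (\<Sum>k. scaleR (if k \<le> 1 then 1 else 0) ((-w)^k))"
  proof (rule suminf_cong)
    fix k
    have "(\<Sum>i\<le>k. f i * f (k - i)) = (\<Sum>i\<le>k. scaleR (bc i * bc (k - i)) ((-w)^k))"
    proof (rule sum.cong[OF refl])
      fix i assume "i \<in> {..k}"
      hence "i + (k - i) = k" by simp
      hence "(-w)^i * (-w)^(k-i) = (-w)^k" by (metis power_add)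
      thus "f i * f (k - i) = scaleR (bc i * bc (k - i)) ((-w)^k)" unfolding f_def by simp
    qed
    also have "\<dots> = scaleR (\<Sum>i\<le>k. bc i * bc (k - i)) ((-w)^k)" by (simp add: scaleR_sum_left)
    finally show "(\<Sum>i\<le>k. f i * f (k - i)) = scaleR (if k \<le> 1 then 1 else 0) ((-w)^k)"
      by (simp only: bc_conv)
  qed
  also have "\<dots> = (\<Sum>k\<in>{0,1}. scaleR (if k \<le> 1 then 1 else 0) ((-w)^k))"
    by (rule suminf_finite) auto
  also have "\<dots> = 1 - w" by simp
  finally have ss: "s * s = 1 - w" .
  have pw: "adj ((-w)^k) = (-w)^k" for k
  proof (induction k)
    case 0 show ?case by (simp add: adj_one)
  next
    case (Suc k) then show ?case by (simp only: power_Suc adj_mult adj_minus aw power_commutes)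
  qed
  have afk: "adj (f k) = f k" for k by (simp only: f_def adj_scaleR pw)
  have as: "adj s = s" unfolding s_def adj_suminf[OF sf] afk ..
  have cm: "t * s = s * t" if "t * w = w * t" for t
  proof -
    have tw: "t * (-w) = (-w) * t" using that by simp
    have "t * s = (\<Sum>k. t * f k)" unfolding s_def by (rule suminf_mult[OF sf, symmetric])
    also have "\<dots> = (\<Sum>k. f k * t)"
      by (rule suminf_cong) (simp add: f_def power_commuting_commutes[OF tw[symmetric]])
    also have "\<dots> = s * t" unfolding s_def by (rule suminf_mult2[OF sf, symmetric])
    finally show ?thesis .
  qed
  show ?thesis using as ss cm by blast
qed


lemma graph_lemma:
  fixes e n :: "'a::cstar_algebra"
  assumes ep: "is_projection e" and en: "e * n = 0" and nf: "n * (1 - e) = 0"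
  shows "\<exists>G. is_projection G \<and> G * (e + n) = e + n \<and> (e + n) * G = G \<and>
             mvn_equiv G e \<and> mvn_equiv (1 - G) (1 - e)"
proof -
  define m where "m = adj n"
  have ae: "adj e = e" and ee: "e * e = e" using ep by (auto simp: is_projection_def)
  have ne: "n * e = n" using nf by (simp add: algebra_simps)
  have "m * e = adj (e * n)" by (simp add: m_def adj_mult ae)
  hence me: "m * e = 0" by (simp add: en adj_zero)
  have "e * m = adj (n * e)" by (simp add: m_def adj_mult ae)
  hence em: "e * m = m" by (simp add: ne m_def adj_adj)
  have "n * n = (n * e) * n" by (simp add: ne)
  also have "\<dots> = n * (e * n)" by (simp only: mult.assoc)
  finally have nn: "n * n = 0" by (simp add: en)
  have "m * m = m * (e * m)" by (simp add: em)
  also have "\<dots> = (m * e) * m" by (simp only: mult.assoc)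
  finally have mm: "m * m = 0" by (simp add: me)
  have am: "adj m = n" unfolding m_def by (rule adj_adj)
  define h where "h = n + m"
  have ah: "adj h = h" unfolding h_def by (simp add: adj_add am m_def adj_adj)
  obtain D where D: "(1 + h*h)*D = 1" "D*(1+h*h) = 1" "adj D = D" "norm (1 - 2*D) \<le> 1"
    using D_exists[OF ah] by blast
  define C where "C = 1 + h*h"
  have CD: "C * D = 1" "D * C = 1" using D unfolding C_def by auto
  have hh: "h * h = n * m + m * n" unfolding h_def
    by (simp add: algebra_simps nn mm)
  have eC: "e * C = C * e" unfolding C_def hh
    by (simp add: algebra_simps lift[OF en] lift[OF me] lift[OF em] lift[OF ne] en me em ne)
  have nC: "n * C = C * n" unfolding C_def hh
    by (simp add: algebra_simps lift[OF nn] nn)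
  have mC: "m * C = C * m" unfolding C_def hh
    by (simp add: algebra_simps lift[OF mm] mm)
  have eD: "e * D = D * e" by (rule inv_comm[OF CD eC])
  have nD: "n * D = D * n" by (rule inv_comm[OF CD nC])
  have mD: "m * D = D * m" by (rule inv_comm[OF CD mC])
  define w where "w = 1 - 2 * D"
  have a2: "adj (2::'a) = 2" by (simp only: one_add_one[symmetric] adj_add adj_one)
  have aw: "adj w = w" unfolding w_def
    by (simp add: adj_diff adj_one adj_mult adj_add D(3) a2 mult_2 mult_2_right)
  obtain s where s: "adj s = s" "s * s = 1 - w" "\<And>t. t * w = w * t \<Longrightarrow> t * s = s * t"
    using sqrt_exists[OF aw] D(4) unfolding w_def by blast
  define r where "r = scaleR (1 / sqrt 2) s"
  have s2: "s * s = scaleR 2 D" using s(2) unfolding w_def by (simp add: scaleR_conv_of_real)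
  have c: "1 / sqrt 2 * (1 / sqrt 2) = (1/2::real)" unfolding times_divide_times_eq by simp
  have "r * r = scaleR (1 / sqrt 2 * (1 / sqrt 2)) (s * s)" unfolding r_def by (simp only: mult_scaleR_left mult_scaleR_right scaleR_scaleR)
  also have "\<dots> = D" unfolding c s2 by simp
  finally have rr: "r * r = D" .
  have rc: "x * r = r * x" if "x * D = D * x" for x
  proof -
    have "x * w = w * x" unfolding w_def mult_2 using that by (simp add: algebra_simps)
    hence "x * s = s * x" by (rule s(3))
    thus ?thesis unfolding r_def by simp
  qed
  have ar: "adj r = r" unfolding r_def by (simp add: adj_scaleR s(1))
  have er: "e * r = r * e" by (rule rc[OF eD])
  have nr: "n * r = r * n" by (rule rc[OF nD])
  have mr: "m * r = r * m" by (rule rc[OF mD])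
  have Dr: "D * r = r * D" by (rule rc) simp
  have eCe: "e * C = e + m * n" unfolding C_def hh
    by (simp add: algebra_simps lift[OF en] lift[OF em] en em)
  have fC: "(1 - e) * C = (1 - e) + n * m" unfolding C_def hh
    by (simp add: algebra_simps lift[OF en] lift[OF em] en em)
  have "D * (e * C) = (D * C) * e" by (simp add: eC mult.assoc)
  hence eDC: "D * (e * C) = e" by (simp add: CD(2))
  have Dmn: "D * (m * n) = e - D * e"
    using eDC unfolding eCe by (simp add: algebra_simps)
  have "D * ((1 - e) * C) = 1 - e" by (simp add: algebra_simps eDC CD(2))
  hence Dnm: "D * (n * m) = 1 - e - D + D * e"
    unfolding fC by (simp add: algebra_simps)
  note rules = ee en ne me em nn mm lift[OF ee] lift[OF en] lift[OF ne] lift[OF me] lift[OF em]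
     lift[OF nn] lift[OF mm] eD nD mD lift[OF eD] lift[OF nD] lift[OF mD] Dmn Dnm lift[OF Dmn] lift[OF Dnm]
     er nr mr Dr lift[OF er] lift[OF nr] lift[OF mr] lift[OF Dr] rr lift[OF rr]
  define G where "G = (e + n) * D * (e + m)"
  have aG: "adj G = G" unfolding G_def by (simp add: adj_mult adj_add ae am D(3) mult.assoc m_def[symmetric])
  have GG: "G * G = G" unfolding G_def by (simp add: algebra_simps rules)
  have G1: "G * (e + n) = e + n" unfolding G_def by (simp add: algebra_simps rules)
  have G2: "(e + n) * G = G" unfolding G_def by (simp add: algebra_simps rules)
  have mv1: "mvn_equiv G e" unfolding mvn_equiv_def
  proof (rule exI[of _ "(e + n) * r * e"], rule conjI)
    have a: "adj ((e + n) * r * e) = e * r * (e + m)" by (simp add: adj_mult adj_add ae ar am mult.assoc m_def[symmetric])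
    show "(e + n) * r * e * adj ((e + n) * r * e) = G" unfolding a G_def by (simp add: algebra_simps rules)
    show "adj ((e + n) * r * e) * ((e + n) * r * e) = e" unfolding a by (simp add: algebra_simps rules)
  qed
  have mv2: "mvn_equiv (1 - G) (1 - e)" unfolding mvn_equiv_def
  proof (rule exI[of _ "((1 - e) - m) * r * (1 - e)"], rule conjI)
    have a: "adj (((1 - e) - m) * r * (1 - e)) = (1 - e) * r * ((1 - e) - n)"
      by (simp add: adj_mult adj_diff adj_one ae ar am mult.assoc m_def[symmetric])
    show "((1 - e) - m) * r * (1 - e) * adj (((1 - e) - m) * r * (1 - e)) = 1 - G"
      unfolding a G_def by (simp add: algebra_simps rules)
    show "adj (((1 - e) - m) * r * (1 - e)) * (((1 - e) - m) * r * (1 - e)) = 1 - e"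
      unfolding a by (simp add: algebra_simps rules)
  qed
  have "is_projection G" unfolding is_projection_def using aG GG by simp
  thus ?thesis using G1 G2 mv1 mv2 by blast
qed

theorem mainTheorem6:
  fixes a p q :: "'a::cstar_algebra"
  assumes "is_projection p" and "is_projection q" and "invertible_upto a p q"
  shows "(\<exists>q'. is_projection q' \<and> mvn_equiv q' q \<and> invertible_upto a p q' \<and>
              q' * a * (1 - p) = 0)
       \<and> (\<exists>p'. is_projection p' \<and> mvn_equiv p' p \<and> invertible_upto a p' q \<and>
              (1 - q) * a * p' = 0)"
proof -
  have pp: "p * p = p" "adj p = p" using assms(1) by (auto simp: is_projection_def)
  have qq: "q * q = q" "adj q = q" using assms(2) by (auto simp: is_projection_def)
  define P where "P = 1 - p"
  define Q where "Q = 1 - q"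
  obtain b where b: "b = P * b * Q" "Q * a * P * b = Q" "b * Q * a * P = P"
    using assms(3) unfolding invertible_upto_def P_def Q_def by blast
  have PP: "P * P = P" "p * P = 0" "P * p = 0" unfolding P_def using pp by (simp_all add: algebra_simps)
  have QQ: "Q * Q = Q" "q * Q = 0" "Q * q = 0" unfolding Q_def using qq by (simp_all add: algebra_simps)
  have Pb: "P * b = b" by (metis b(1) PP(1) mult.assoc)
  have bQ: "b * Q = b" by (metis b(1) QQ(1) mult.assoc)
  have pb: "p * b = 0" by (metis Pb PP(2) mult.assoc mult_zero_left)
  have bq: "b * q = 0" by (metis bQ QQ(3) mult.assoc mult_zero_right)
  have Qq1: "Q + q = 1" "1 - Q = q" unfolding Q_def by simp_all
  have Pp1: "P + p = 1" "1 - P = p" unfolding P_def by simp_all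
  have part_a: "\<exists>q'. is_projection q' \<and> mvn_equiv q' q \<and> invertible_upto a p q' \<and>
              q' * a * (1 - p) = 0"
  proof -
    define n where "n = q * a * P * b"
    have en: "Q * n = 0" unfolding n_def by (simp add: QQ mult.assoc[symmetric])
    have nf: "n * (1 - Q) = 0" unfolding n_def Qq1 by (simp add: bq mult.assoc)
    have eproj: "is_projection Q" unfolding is_projection_def Q_def
      by (simp add: adj_diff adj_one qq algebra_simps)
    obtain G where G: "is_projection G" "G * (Q + n) = Q + n" "(Q + n) * G = G"
        "mvn_equiv G Q" "mvn_equiv (1 - G) (1 - Q)"
      using graph_lemma[OF eproj en nf] by blast
    have GG: "G * G = G" "adj G = G" using G(1) by (auto simp: is_projection_def)
    define x where "x = Q * a * P"
    have bx: "b * x = P" unfolding x_def by (metis b(3) mult.assoc)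
    have y: "(Q + n) * x = a * P"
    proof -
      have "n * x = q * a * P * (b * x)" unfolding n_def by (simp add: mult.assoc)
      also have "\<dots> = q * a * P" by (simp add: bx PP(1) mult.assoc)
      finally have "(Q + n) * x = (Q + q) * a * P" unfolding x_def by (simp add: algebra_simps lift[OF QQ(1)] QQ(1))
      thus ?thesis using Qq1 by simp
    qed
    have apb: "a * P * b = Q + n"
    proof -
      have "a * P * b = (Q + q) * a * P * b" using Qq1 by simp
      also have "\<dots> = Q + n" using b(2) unfolding n_def by (simp add: algebra_simps)
      finally show ?thesis .
    qed
    have GaP: "G * (a * P) = a * P" using G(2) y by (metis mult.assoc)
    have proj: "is_projection (1 - G)" unfolding is_projection_def
      by (simp add: adj_diff adj_one GG algebra_simps)
    have z: "(1 - G) * a * (1 - p) = 0" using GaP unfolding P_def by (simp add: algebra_simps)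
    have inv: "invertible_upto a p (1 - G)" unfolding invertible_upto_def
    proof (rule exI[of _ "b * G"], intro conjI)
      have g: "1 - (1 - G) = G" by simp
      have Pb': "(1 - p) * b = b" using Pb unfolding P_def .
      have "(1 - p) * (b * G) * (1 - (1 - G)) = ((1 - p) * b) * (G * G)" by (simp only: g mult.assoc)
      also have "\<dots> = b * G" by (simp only: Pb' GG(1))
      finally show "b * G = (1 - p) * (b * G) * (1 - (1 - G))" by (rule sym)
      have "(1 - (1 - G)) * a * (1 - p) * (b * G) = G * (a * P * b) * G" by (simp only: g P_def mult.assoc)
      also have "\<dots> = G" unfolding apb using G(2,3) by simp
      finally show "(1 - (1 - G)) * a * (1 - p) * (b * G) = 1 - (1 - G)" by (simp only: g)
      have "b * G * (1 - (1 - G)) * a * (1 - p) = b * (G * G) * (a * P)" by (simp only: g P_def mult.assoc)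
      also have "\<dots> = b * (G * (a * P))" by (simp only: GG(1) mult.assoc)
      also have "\<dots> = b * (a * P)" by (simp only: GaP)
      also have "\<dots> = b * Q * a * P" using bQ by (simp add: mult.assoc)
      also have "\<dots> = P" by (rule b(3))
      finally show "b * G * (1 - (1 - G)) * a * (1 - p) = 1 - p" by (simp only: P_def)
    qed
    have mv: "mvn_equiv (1 - G) q" using G(5) unfolding Qq1 .
    show ?thesis by (rule exI[of _ "1 - G"], intro conjI, fact proj, fact mv, fact inv, fact z)
  qed
  have part_b: "\<exists>p'. is_projection p' \<and> mvn_equiv p' p \<and> invertible_upto a p' q \<and>
              (1 - q) * a * p' = 0"
  proof -
    define n where "n = - (b * a * p)"
    have en: "p * n = 0" unfolding n_def by (simp add: pb mult.assoc[symmetric])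
    have nf: "n * (1 - p) = 0" unfolding n_def using PP(2) unfolding P_def by (simp add: mult.assoc)
    obtain G where G: "is_projection G" "G * (p + n) = p + n" "(p + n) * G = G"
        "mvn_equiv G p" "mvn_equiv (1 - G) (1 - p)"
      using graph_lemma[OF assms(1) en nf] by blast
    have GG: "G * G = G" "adj G = G" using G(1) by (auto simp: is_projection_def)
    have Qab: "Q * a * b = Q" using b(2) Pb by (simp add: mult.assoc)
    have Qapn: "Q * a * (p + n) = 0"
    proof -
      have "Q * a * n = - (Q * a * b * a * p)" unfolding n_def by (simp add: mult.assoc)
      also have "\<dots> = - (Q * a * p)" using Qab by simp
      finally show ?thesis by (simp add: algebra_simps)
    qed
    have QaG: "Q * a * G = 0" using Qapn G(3) by (metis mult.assoc mult_zero_left)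
    have z: "(1 - q) * a * G = 0" using QaG unfolding Q_def .
    have inv: "invertible_upto a G q" unfolding invertible_upto_def
    proof (rule exI[of _ "(1 - G) * b"], intro conjI)
      have i: "(1 - G) * (1 - G) = 1 - G" using GG(1) by (simp add: algebra_simps)
      have "(1 - G) * ((1 - G) * b) * (1 - q) = ((1 - G) * (1 - G)) * (b * (1 - q))"
        by (simp only: mult.assoc)
      thus "(1 - G) * b = (1 - G) * ((1 - G) * b) * (1 - q)"
        using bQ i unfolding Q_def by simp
      have "Q * a * (1 - G) * ((1 - G) * b) = Q * a * b - Q * a * G * b - Q * a * G * b + Q * a * G * G * b"
        by (simp add: algebra_simps)
      also have "\<dots> = Q" using QaG Qab by simp
      finally show "(1 - q) * a * (1 - G) * ((1 - G) * b) = 1 - q" unfolding Q_def .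
      have bQa: "b * Q * a = P - n"
      proof -
        have "b * Q * a = b * a * (P + p)" using bQ Pp1 by simp
        also have "\<dots> = b * Q * a * P + b * a * p" using bQ by (simp add: algebra_simps)
        also have "\<dots> = P - n" using b(3) unfolding n_def by simp
        finally show ?thesis .
      qed
      have "(1 - G) * b * (1 - q) * a * (1 - G) = (1 - G) * (b * Q * a) - (1 - G) * b * (Q * a * G)"
        unfolding Q_def by (simp add: algebra_simps)
      also have "\<dots> = (1 - G) * (P - n)" using QaG bQa by simp
      also have "\<dots> = (1 - G) - ((p + n) - G * (p + n))" unfolding P_def by (simp add: algebra_simps)
      also have "\<dots> = 1 - G" using G(2) by simp
      finally show "(1 - G) * b * (1 - q) * a * (1 - G) = 1 - G" .
    qed
    show ?thesis by (rule exI[of _ G], intro conjI, fact G(1), fact G(4), fact inv, fact z)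
  qed
  show ?thesis using part_a part_b by (rule conjI)
qed

end
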